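(* Let $n\in\mathbb Z_{>0}$, let $W:=V^{\oplus n}$ and $W_*:=V_*^{\oplus n}$ with the pairing $\langle (v_i),(w_i)\rangle=\sum_i\langle v_i,w_i\rangle$, and let $\varphi:\mathfrak{gl}(V,V_* )\to\mathfrak{gl}(W,W_* )$ be the $n$-fold diagonal map $A\mapsto \mathrm{diag}(A,\dots,A)$. Then the normalizer of $\varphi(\mathfrak{sl}(V,V_* ))$ in $\mathfrak{gl}(W,W_* )$ equals $\varphi(\mathfrak{gl}(V,V_* ))$. Moreover, if $V_*$ is identified with $V$ so that the pairing becomes a nondegenerate symmetric (resp. antisymmetric) form on $V$, then $\varphi(\mathfrak{so}(V))$ (resp. $\varphi(\mathfrak{sp}(V))$) is self-normalizing in $\mathfrak{gl}(W,W_* )$.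
   Context: Ground field $\mathbb C$. $V,V_*$ are countable-dimensional with nondegenerate pairing $\langle\cdot,\cdot\rangle$. $\mathfrak{gl}(V,V_* )$ is the Lie algebra of the associative algebra $V\otimes V_*$ with $(v\otimes w)(v'\otimes w')=\langle v',w\rangle v\otimes w'$; $\mathfrak{sl}(V,V_* )=[\mathfrak{gl}(V,V_* ),\mathfrak{gl}(V,V_* )]$ (the kernel of the trace $v\otimes w\mapsto\langle v,w\rangle$). Given a nondegenerate symmetric form on $V$, $\mathfrak{so}(V)$ denotes the subalgebra $\bigwedge^2V\subset\mathfrak{gl}(V,V)$ (spanned by $v\otimes w-w\otimes v$); given a nondegenerate antisymmetric form, $\mathfrak{sp}(V)$ denotes the subalgebra $\mathrm{Sym}^2V\subset\mathfrak{gl}(V,V)$ (spanned by $v\otimes w+w\otimes v$). Elements of $\mathfrak{gl}(W,W_* )$ are viewed as $n\times n$ block matrices with entries in $\mathfrak{gl}(V,V_* )$. *)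

theory Defs
  imports Main "HOL.Complex"
begin

text \<open>Model: V and V_* are both realised as the space FS of finitely supported
  complex sequences (every countably-infinite-dimensional complex vector space is
  isomorphic to it); the pairing is an arbitrary nondegenerate bilinear form on FS x FS.\<close>

type_synonym vec = "nat \<Rightarrow> complex"
type_synonym op = "vec \<Rightarrow> vec"
type_synonym bmat = "nat \<Rightarrow> nat \<Rightarrow> op"

definition FS :: "vec set" where
  "FS = {f. finite {i. f i \<noteq> 0}}"

definition bilinear_pairing :: "(vec \<Rightarrow> vec \<Rightarrow> complex) \<Rightarrow> bool" where
  "bilinear_pairing p \<longleftrightarrow>
     (\<forall>a x y z. x \<in> FS \<longrightarrow> y \<in> FS \<longrightarrow> z \<in> FS \<longrightarrow>
        p (\<lambda>i. a * x i + y i) z = a * p x z + p y z \<and>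
        p z (\<lambda>i. a * x i + y i) = a * p z x + p z y)"

definition nondegenerate :: "(vec \<Rightarrow> vec \<Rightarrow> complex) \<Rightarrow> bool" where
  "nondegenerate p \<longleftrightarrow>
     (\<forall>x\<in>FS. (\<forall>y\<in>FS. p x y = 0) \<longrightarrow> x = (\<lambda>i. 0)) \<and>
     (\<forall>y\<in>FS. (\<forall>x\<in>FS. p x y = 0) \<longrightarrow> y = (\<lambda>i. 0))"

definition opzero :: op where
  "opzero = (\<lambda>x i. 0)"

text \<open>The operator on V given by the tensor sum_k v_k (x) w_k:  x |-> sum_k <x,w_k> v_k.\<close>
definition tensor_op :: "(vec \<Rightarrow> vec \<Rightarrow> complex) \<Rightarrow> (vec \<times> vec) list \<Rightarrow> op" where
  "tensor_op p ps = (\<lambda>x. if x \<in> FS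
       then (\<lambda>i. \<Sum>k<length ps. p x (snd (ps ! k)) * fst (ps ! k) i)
       else (\<lambda>i. 0))"

text \<open>gl(V,V_*) = V (x) V_*, realised (faithfully) as operators on V.\<close>
definition glV :: "(vec \<Rightarrow> vec \<Rightarrow> complex) \<Rightarrow> op set" where
  "glV p = {T. \<exists>ps. set ps \<subseteq> FS \<times> FS \<and> T = tensor_op p ps}"

definition opbr :: "op \<Rightarrow> op \<Rightarrow> op" where
  "opbr S T = (\<lambda>x i. S (T x) i - T (S x) i)"

text \<open>sl(V,V_*) = [gl(V,V_*), gl(V,V_*)] (linear span of brackets).\<close>
definition slV :: "(vec \<Rightarrow> vec \<Rightarrow> complex) \<Rightarrow> op set" where
  "slV p = {T. \<exists>abs. set abs \<subseteq> glV p \<times> glV p \<and>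
      T = (\<lambda>x i. \<Sum>k<length abs. opbr (fst (abs ! k)) (snd (abs ! k)) x i)}"

text \<open>so(V): span of v (x) w - w (x) v;  sp(V): span of v (x) w + w (x) v
  (here V_* = V with the form b).\<close>
definition soV :: "(vec \<Rightarrow> vec \<Rightarrow> complex) \<Rightarrow> op set" where
  "soV b = {T. \<exists>ps. set ps \<subseteq> FS \<times> FS \<and>
      T = (\<lambda>x. if x \<in> FS
       then (\<lambda>i. \<Sum>k<length ps. b x (snd (ps ! k)) * fst (ps ! k) i
                                 - b x (fst (ps ! k)) * snd (ps ! k) i)
       else (\<lambda>i. 0))}"

definition spV :: "(vec \<Rightarrow> vec \<Rightarrow> complex) \<Rightarrow> op set" where
  "spV b = {T. \<exists>ps. set ps \<subseteq> FS \<times> FS \<and>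
      T = (\<lambda>x. if x \<in> FS
       then (\<lambda>i. \<Sum>k<length ps. b x (snd (ps ! k)) * fst (ps ! k) i
                                 + b x (fst (ps ! k)) * snd (ps ! k) i)
       else (\<lambda>i. 0))}"

text \<open>gl(W,W_*) with W = V^n, W_* = V_*^n: n x n block matrices with entries in gl(V,V_*)
  (indices 0..n-1; entries outside are zero).\<close>
definition glW :: "nat \<Rightarrow> (vec \<Rightarrow> vec \<Rightarrow> complex) \<Rightarrow> bmat set" where
  "glW n p = {X. (\<forall>i j. i < n \<and> j < n \<longrightarrow> X i j \<in> glV p) \<and>
                 (\<forall>i j. \<not> (i < n \<and> j < n) \<longrightarrow> X i j = opzero)}"

definition bbr :: "nat \<Rightarrow> bmat \<Rightarrow> bmat \<Rightarrow> bmat" where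
  "bbr n X Y = (\<lambda>i j x k. \<Sum>l<n. X i l (Y l j x) k - Y i l (X l j x) k)"

definition diagmap :: "nat \<Rightarrow> op \<Rightarrow> bmat" where
  "diagmap n A = (\<lambda>i j. if i = j \<and> i < n then A else opzero)"

definition normalizer :: "nat \<Rightarrow> (vec \<Rightarrow> vec \<Rightarrow> complex) \<Rightarrow> bmat set \<Rightarrow> bmat set" where
  "normalizer n p S = {X \<in> glW n p. \<forall>Y\<in>S. bbr n X Y \<in> S}"

end

theory Submission
  imports Defs
begin

definition zv :: vec where "zv = (\<lambda>i. 0)"
definition ev :: "nat \<Rightarrow> vec" where "ev m = (\<lambda>i. if i = m then 1 else 0)"
definition vsum :: "(complex \<times> vec) list \<Rightarrow> vec" where
  "vsum cs = (\<lambda>i. sum_list (map (\<lambda>a. fst a * snd a i) cs))"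

lemma sum_nth_list: "(\<Sum>k<length ps. f (ps ! k)) = sum_list (map f ps)"
  by (simp add: sum_list_sum_nth atLeast0LessThan)

lemma FS_zv[simp]: "zv \<in> FS" by (simp add: FS_def zv_def)
lemma FS_zero[simp]: "(\<lambda>i. 0) \<in> FS" by (simp add: FS_def)
lemma FS_ev[simp]: "ev m \<in> FS" by (simp add: FS_def ev_def)

lemma FS_lin: assumes "x \<in> FS" "y \<in> FS" shows "(\<lambda>i. a * x i + y i) \<in> FS"
proof -
  have "{i. a * x i + y i \<noteq> 0} \<subseteq> {i. x i \<noteq> 0} \<union> {i. y i \<noteq> 0}" by auto
  thus ?thesis using assms unfolding FS_def by (auto intro: finite_subset)
qed

lemma FS_add: assumes "x \<in> FS" "y \<in> FS" shows "(\<lambda>i. x i + y i) \<in> FS"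
  using FS_lin[OF assms, of 1] by simp
lemma FS_scale: assumes "x \<in> FS" shows "(\<lambda>i. a * x i) \<in> FS"
  using FS_lin[OF assms FS_zero, of a] by simp
lemma FS_minus: assumes "x \<in> FS" "y \<in> FS" shows "(\<lambda>i. x i - y i) \<in> FS"
  using FS_lin[OF assms(2) assms(1), of "-1"] by simp

lemma FS_vsum: "snd ` set cs \<subseteq> FS \<Longrightarrow> vsum cs \<in> FS"
proof (induction cs)
  case Nil thus ?case by (simp add: vsum_def)
next
  case (Cons a cs)
  obtain c v where a: "a = (c,v)" by fastforce
  have "vsum (a#cs) = (\<lambda>i. c * v i + vsum cs i)" by (simp add: vsum_def a)
  thus ?case using Cons FS_lin[of v "vsum cs" c] a by auto
qed

lemma FS_bound: assumes "x \<in> FS" shows "\<exists>N. \<forall>i\<ge>N. x i = 0"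
proof -
  have f: "finite {i. x i \<noteq> 0}" using assms by (simp add: FS_def)
  obtain N where "\<forall>i\<in>{i. x i \<noteq> 0}. i < N" using f[unfolded finite_nat_set_iff_bounded] by blast
  thus ?thesis by (metis (mono_tags, lifting) leD mem_Collect_eq)
qed

lemma vsum_bound: assumes "\<forall>v\<in>snd ` set cs. \<forall>i\<ge>N. v i = 0" shows "\<forall>i\<ge>N. vsum cs i = 0"
  using assms by (induction cs) (auto simp: vsum_def)

lemma list_bound: "set vs \<subseteq> FS \<Longrightarrow> \<exists>N. \<forall>v\<in>set vs. \<forall>i\<ge>N. v i = 0"
proof (induction vs)
  case Nil thus ?case by simp
next
  case (Cons v vs)
  then obtain N where N: "\<forall>v\<in>set vs. \<forall>i\<ge>N. v i = 0" by auto
  obtain M where M: "\<forall>i\<ge>M. v i = 0" using FS_bound[of v] Cons.prems by auto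
  show ?case by (rule exI[of _ "max N M"]) (use N M in auto)
qed

definition good :: "op \<Rightarrow> bool" where
  "good T \<longleftrightarrow> (\<forall>x. x \<notin> FS \<longrightarrow> T x = zv) \<and> (\<forall>x. T x \<in> FS) \<and> T zv = zv
     \<and> (\<exists>N. \<forall>x i. N \<le> i \<longrightarrow> T x i = 0)"

locale bil =
  fixes p :: "vec \<Rightarrow> vec \<Rightarrow> complex"
  assumes bl: "bilinear_pairing p"
begin

lemma bl1: "x \<in> FS \<Longrightarrow> y \<in> FS \<Longrightarrow> z \<in> FS \<Longrightarrow> p (\<lambda>i. a * x i + y i) z = a * p x z + p y z"
  using bl unfolding bilinear_pairing_def by blast
lemma bl2: "x \<in> FS \<Longrightarrow> y \<in> FS \<Longrightarrow> z \<in> FS \<Longrightarrow> p z (\<lambda>i. a * x i + y i) = a * p z x + p z y"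
  using bl unfolding bilinear_pairing_def by blast

lemma p_zero1[simp]: "z \<in> FS \<Longrightarrow> p (\<lambda>i. 0) z = 0"
  using bl1[of "\<lambda>i. 0" "\<lambda>i. 0" z 1] by simp
lemma p_zero2[simp]: "z \<in> FS \<Longrightarrow> p z (\<lambda>i. 0) = 0"
  using bl2[of "\<lambda>i. 0" "\<lambda>i. 0" z 1] by simp
lemma p_zv1[simp]: "z \<in> FS \<Longrightarrow> p zv z = 0" by (simp add: zv_def)
lemma p_zv2[simp]: "z \<in> FS \<Longrightarrow> p z zv = 0" by (simp add: zv_def)

lemma p_scale1: "x \<in> FS \<Longrightarrow> z \<in> FS \<Longrightarrow> p (\<lambda>i. a * x i) z = a * p x z"
  using bl1[of x "\<lambda>i. 0" z a] by simp
lemma p_scale2: "x \<in> FS \<Longrightarrow> z \<in> FS \<Longrightarrow> p z (\<lambda>i. a * x i) = a * p z x"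
  using bl2[of x "\<lambda>i. 0" z a] by simp
lemma p_add1: "x \<in> FS \<Longrightarrow> y \<in> FS \<Longrightarrow> z \<in> FS \<Longrightarrow> p (\<lambda>i. x i + y i) z = p x z + p y z"
  using bl1[of x y z 1] by simp
lemma p_add2: "x \<in> FS \<Longrightarrow> y \<in> FS \<Longrightarrow> z \<in> FS \<Longrightarrow> p z (\<lambda>i. x i + y i) = p z x + p z y"
  using bl2[of x y z 1] by simp
lemma p_diff1: "x \<in> FS \<Longrightarrow> y \<in> FS \<Longrightarrow> z \<in> FS \<Longrightarrow> p (\<lambda>i. x i - y i) z = p x z - p y z"
  using bl1[of y x z "-1"] by simp
lemma p_diff2: "x \<in> FS \<Longrightarrow> y \<in> FS \<Longrightarrow> z \<in> FS \<Longrightarrow> p z (\<lambda>i. x i - y i) = p z x - p z y"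
  using bl2[of y x z "-1"] by simp

lemma p_vsum1: "snd ` set cs \<subseteq> FS \<Longrightarrow> z \<in> FS \<Longrightarrow>
   p (vsum cs) z = sum_list (map (\<lambda>a. fst a * p (snd a) z) cs)"
proof (induction cs)
  case Nil thus ?case by (simp add: vsum_def)
next
  case (Cons a cs)
  obtain c v where a: "a = (c,v)" by fastforce
  have "vsum (a#cs) = (\<lambda>i. c * v i + vsum cs i)" by (simp add: vsum_def a)
  thus ?case using Cons bl1[of v "vsum cs" z c] FS_vsum[of cs] a by auto
qed

lemma p_vsum2: "snd ` set cs \<subseteq> FS \<Longrightarrow> z \<in> FS \<Longrightarrow>
   p z (vsum cs) = sum_list (map (\<lambda>a. fst a * p z (snd a)) cs)"
proof (induction cs)
  case Nil thus ?case by (simp add: vsum_def)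
next
  case (Cons a cs)
  obtain c v where a: "a = (c,v)" by fastforce
  have "vsum (a#cs) = (\<lambda>i. c * v i + vsum cs i)" by (simp add: vsum_def a)
  thus ?case using Cons bl2[of v "vsum cs" z c] FS_vsum[of cs] a by auto
qed


lemma tensor_pt: "x \<in> FS \<Longrightarrow> tensor_op p ps x i = sum_list (map (\<lambda>a. p x (snd a) * fst a i) ps)"
  using sum_nth_list[where f="\<lambda>a. p x (snd a) * fst a i" and ps=ps]
  by (simp add: tensor_op_def)

lemma tensor_out: "x \<notin> FS \<Longrightarrow> tensor_op p ps x = zv"
  by (simp add: tensor_op_def zv_def)

lemma tensor_vsum: "x \<in> FS \<Longrightarrow> tensor_op p ps x = vsum (map (\<lambda>a. (p x (snd a), fst a)) ps)"
  by (rule ext) (simp add: tensor_pt vsum_def o_def)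

lemma tensor_FS: "set ps \<subseteq> FS \<times> FS \<Longrightarrow> tensor_op p ps x \<in> FS"
  by (cases "x \<in> FS") (force simp: tensor_vsum tensor_out intro!: FS_vsum)+

lemma tensor_zv: "set ps \<subseteq> FS \<times> FS \<Longrightarrow> tensor_op p ps zv = zv"
proof (rule ext)
  fix i assume "set ps \<subseteq> FS \<times> FS"
  hence "sum_list (map (\<lambda>a. p zv (snd a) * fst a i) ps) = 0"
    by (induction ps) auto
  thus "tensor_op p ps zv i = zv i" by (simp add: tensor_pt zv_def)
qed

lemma tensor_bound: "set ps \<subseteq> FS \<times> FS \<Longrightarrow> \<exists>N. \<forall>x i. N \<le> i \<longrightarrow> tensor_op p ps x i = 0"
proof -
  assume a: "set ps \<subseteq> FS \<times> FS"
  hence "set (map fst ps) \<subseteq> FS" by auto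
  then obtain N where N: "\<forall>v\<in>set (map fst ps). \<forall>i\<ge>N. v i = 0" using list_bound by blast
  have "tensor_op p ps x i = 0" if "N \<le> i" for x i
  proof (cases "x \<in> FS")
    case True
    have "\<forall>i\<ge>N. vsum (map (\<lambda>a. (p x (snd a), fst a)) ps) i = 0"
      by (rule vsum_bound) (use N in auto)
    thus ?thesis using that True by (simp add: tensor_vsum)
  qed (simp add: tensor_out zv_def)
  thus ?thesis by blast
qed


lemma glV_good: "T \<in> glV p \<Longrightarrow> good T"
  unfolding glV_def good_def using tensor_out tensor_FS tensor_zv tensor_bound by blast

lemma glV_opzero: "opzero \<in> glV p"
proof -
  have "opzero = tensor_op p []" by (rule ext) (simp add: tensor_op_def opzero_def)
  thus ?thesis unfolding glV_def by (auto intro!: exI[of _ "[]"])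
qed

lemma glV_diff: assumes "S \<in> glV p" "T \<in> glV p" shows "(\<lambda>x i. S x i - T x i) \<in> glV p"
proof -
  obtain ps qs where ps: "set ps \<subseteq> FS \<times> FS" "S = tensor_op p ps"
    and qs: "set qs \<subseteq> FS \<times> FS" "T = tensor_op p qs" using assms unfolding glV_def by blast
  let ?rs = "ps @ map (\<lambda>a. (\<lambda>i. - fst a i, snd a)) qs"
  have "set ?rs \<subseteq> FS \<times> FS" using ps qs FS_scale[of _ "-1"] by auto
  moreover have "(\<lambda>x i. S x i - T x i) = tensor_op p ?rs"
  proof (intro ext)
    fix x i show "S x i - T x i = tensor_op p ?rs x i"
    proof (cases "x \<in> FS")
      case True
      have "sum_list (map (\<lambda>a. p x (snd a) * fst a i) (map (\<lambda>a. (\<lambda>i. - fst a i, snd a)) qs))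
          = - sum_list (map (\<lambda>a. p x (snd a) * fst a i) qs)"
        by (induction qs) auto
      thus ?thesis using True ps qs by (simp add: tensor_pt)
    qed (simp add: ps qs tensor_out zv_def)
  qed
  ultimately show ?thesis unfolding glV_def by blast
qed

lemma glV_add: assumes "S \<in> glV p" "T \<in> glV p" shows "(\<lambda>x i. S x i + T x i) \<in> glV p"
proof -
  obtain ps qs where ps: "set ps \<subseteq> FS \<times> FS" "S = tensor_op p ps"
    and qs: "set qs \<subseteq> FS \<times> FS" "T = tensor_op p qs" using assms unfolding glV_def by blast
  let ?rs = "ps @ qs"
  have "set ?rs \<subseteq> FS \<times> FS" using ps qs by auto
  moreover have "(\<lambda>x i. S x i + T x i) = tensor_op p ?rs"
  proof (intro ext)
    fix x i show "S x i + T x i = tensor_op p ?rs x i"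
      by (cases "x \<in> FS") (simp_all add: ps qs tensor_out zv_def tensor_pt)
  qed
  ultimately show ?thesis unfolding glV_def by blast
qed

lemma glV_comp: assumes "S \<in> glV p" "T \<in> glV p" shows "(\<lambda>x. S (T x)) \<in> glV p"
proof -
  obtain ps qs where ps: "set ps \<subseteq> FS \<times> FS" "S = tensor_op p ps"
    and qs: "set qs \<subseteq> FS \<times> FS" "T = tensor_op p qs" using assms unfolding glV_def by blast
  let ?rs = "concat (map (\<lambda>a. map (\<lambda>b. (\<lambda>i. p (fst b) (snd a) * fst a i, snd b)) qs) ps)"
  have "set ?rs \<subseteq> FS \<times> FS" using ps qs FS_scale by fastforce
  moreover have "(\<lambda>x. S (T x)) = tensor_op p ?rs"
  proof (intro ext)
    fix x i show "S (T x) i = tensor_op p ?rs x i"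
    proof (cases "x \<in> FS")
      case True
      have Tx: "T x = vsum (map (\<lambda>a. (p x (snd a), fst a)) qs)" using True qs by (simp add: tensor_vsum)
      have pT: "p (T x) w = sum_list (map (\<lambda>b. p x (snd b) * p (fst b) w) qs)" if "w \<in> FS" for w
        unfolding Tx using qs that by (subst p_vsum1) (auto simp: o_def)
      have "sum_list (map (\<lambda>a. p (T x) (snd a) * fst a i) ps) = 
         sum_list (map (\<lambda>a. p x (snd a) * fst a i) ?rs)"
        using ps(1)
      proof (induction ps)
        case Nil thus ?case by simp
      next
        case (Cons a ps)
        obtain v w where a: "a = (v,w)" by fastforce
        have w: "w \<in> FS" using Cons.prems a by auto
        have "p (T x) w * v i = sum_list (map (\<lambda>b. p x (snd b) * (p (fst b) w * v i)) qs)"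
          by (simp add: pT[OF w] sum_list_mult_const[symmetric] mult.assoc)
        thus ?case using Cons a by (simp add: o_def)
      qed
      thus ?thesis using True ps qs tensor_FS by (simp add: tensor_pt)
    qed (simp add: ps qs tensor_out tensor_zv)
  qed
  ultimately show ?thesis unfolding glV_def by blast
qed

lemma glV_opbr: "S \<in> glV p \<Longrightarrow> T \<in> glV p \<Longrightarrow> opbr S T \<in> glV p"
  unfolding opbr_def using glV_diff[OF glV_comp glV_comp] by blast

lemma slV_glV: "T \<in> slV p \<Longrightarrow> T \<in> glV p"
proof -
  assume "T \<in> slV p"
  then obtain abs where ab: "set abs \<subseteq> glV p \<times> glV p"
    and T: "T = (\<lambda>x i. \<Sum>k<length abs. opbr (fst (abs ! k)) (snd (abs ! k)) x i)"
    unfolding slV_def by blast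
  have "(\<lambda>x i. sum_list (map (\<lambda>a. opbr (fst a) (snd a) x i) abs)) \<in> glV p" using ab
  proof (induction abs)
    case Nil thus ?case using glV_opzero by (simp add: opzero_def)
  next
    case (Cons a abs)
    thus ?case using glV_add[OF glV_opbr] by auto
  qed
  thus ?thesis unfolding T using sum_nth_list[where f="\<lambda>a. opbr (fst a) (snd a) _ _" and ps=abs] by simp
qed


end

lemma good_opzero: "good opzero"
  by (auto simp: good_def opzero_def zv_def)

lemma good_zv: "good T \<Longrightarrow> T zv = zv" by (simp add: good_def)

lemma (in bil) glW_good: "X \<in> glW n p \<Longrightarrow> good (X i j)"
  unfolding glW_def using glV_good good_opzero by (cases "i < n \<and> j < n") auto

lemma bbr_entry:
  assumes "\<forall>i l. X i l zv = zv" "B zv = zv" "i < n" "j < n"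
  shows "bbr n X (diagmap n B) i j x k = X i j (B x) k - B (X i j x) k"
proof -
  have "bbr n X (diagmap n B) i j x k = (\<Sum>l<n. (if l = j then X i j (B x) k else 0) - (if l = i then B (X i j x) k else 0))"
    unfolding bbr_def
  proof (rule sum.cong[OF refl])
    fix l assume "l \<in> {..<n}"
    have z: "X i l (\<lambda>i. 0) k = 0" using assms(1) unfolding zv_def by (metis (mono_tags))
    show "X i l (diagmap n B l j x) k - diagmap n B i l (X l j x) k =
      (if l = j then X i j (B x) k else 0) - (if l = i then B (X i j x) k else 0)"
      using assms z by (auto simp: diagmap_def opzero_def)
  qed
  also have "\<dots> = X i j (B x) k - B (X i j x) k"
    using assms by (simp add: sum_subtractf)
  finally show ?thesis .
qed

lemma bbr_diag:
  assumes "A zv = zv" "B zv = zv"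
  shows "bbr n (diagmap n A) (diagmap n B) = diagmap n (opbr A B)"
proof (intro ext)
  fix i j x k
  have zA: "A (\<lambda>i. 0) = (\<lambda>i. 0)" and zB: "B (\<lambda>i. 0) = (\<lambda>i. 0)" using assms by (simp_all add: zv_def)
  have "bbr n (diagmap n A) (diagmap n B) i j x k = (\<Sum>l<n. if l = i then (if i = j \<and> i < n then opbr A B x k else 0) else 0)"
    unfolding bbr_def
    by (rule sum.cong[OF refl]) (auto simp: diagmap_def opzero_def opbr_def zA zB)
  also have "\<dots> = diagmap n (opbr A B) i j x k"
    by (simp add: diagmap_def opzero_def)
  finally show "bbr n (diagmap n A) (diagmap n B) i j x k = diagmap n (opbr A B) i j x k" .
qed

lemma (in bil) diag_glW: "A \<in> glV p \<Longrightarrow> diagmap n A \<in> glW n p"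
  unfolding glW_def diagmap_def using glV_opzero by auto

lemma diag_inj: "0 < n \<Longrightarrow> diagmap n A = diagmap n B \<Longrightarrow> A = B"
  unfolding diagmap_def by (drule fun_cong[of _ _ 0], drule fun_cong[of _ _ 0]) simp

locale nbil = bil +
  assumes nd: "nondegenerate p"
begin

lemma nd1: "x \<in> FS \<Longrightarrow> (\<And>y. y \<in> FS \<Longrightarrow> p x y = 0) \<Longrightarrow> x = zv"
  using nd unfolding nondegenerate_def zv_def by blast
lemma nd2: "y \<in> FS \<Longrightarrow> (\<And>x. x \<in> FS \<Longrightarrow> p x y = 0) \<Longrightarrow> y = zv"
  using nd unfolding nondegenerate_def zv_def by blast

lemma extract_diag:
  assumes n: "0 < n" and X: "X \<in> glW n p"
    and Bz: "\<And>m w. w \<in> FS \<Longrightarrow> B m w zv = zv"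
    and Bm: "\<And>w. w \<in> FS \<Longrightarrow> \<exists>M. \<forall>m\<ge>M. \<forall>y\<in>FS. B m w y m = p y w"
    and H: "\<And>m w. w \<in> FS \<Longrightarrow> \<exists>C. bbr n X (diagmap n (B m w)) = diagmap n C"
  shows "X = diagmap n (X 0 0)"
proof -
  have G: "good (X i j)" for i j using glW_good[OF X] .
  have Xz: "\<forall>i l. X i l zv = zv" using G good_zv by blast
  have main: "(i \<noteq> j \<longrightarrow> p (X i j x) w = 0) \<and> (i = j \<longrightarrow> p (X i i x) w = p (X 0 0 x) w)"
    if ij: "i < n" "j < n" and x: "x \<in> FS" and w: "w \<in> FS" for i j x w
  proof -
    obtain N1 where N1: "\<forall>x k. N1 \<le> k \<longrightarrow> X i j x k = 0" using G[of i j] unfolding good_def by blast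
    obtain N2 where N2: "\<forall>x k. N2 \<le> k \<longrightarrow> X 0 0 x k = 0" using G[of 0 0] unfolding good_def by blast
    obtain M where M: "\<forall>m\<ge>M. \<forall>y\<in>FS. B m w y m = p y w" using Bm[OF w] by blast
    define m where "m = max (max N1 N2) M"
    have FSX: "X a b y \<in> FS" for a b y using G[of a b] unfolding good_def by blast
    have e1: "bbr n X (diagmap n (B m w)) i j x m = - p (X i j x) w"
      using bbr_entry[of X "B m w" i n j x m, OF Xz Bz[OF w] ij] N1 M FSX unfolding m_def by simp
    have e2: "bbr n X (diagmap n (B m w)) 0 0 x m = - p (X 0 0 x) w"
      using bbr_entry[of X "B m w" 0 n 0 x m, OF Xz Bz[OF w] n n] N2 M FSX unfolding m_def by simp
    obtain C where C: "bbr n X (diagmap n (B m w)) = diagmap n C" using H[OF w] by blast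
    show ?thesis
    proof (intro conjI impI)
      assume "i \<noteq> j"
      hence "bbr n X (diagmap n (B m w)) i j x m = 0" unfolding C by (simp add: diagmap_def opzero_def)
      thus "p (X i j x) w = 0" using e1 by simp
    next
      assume "i = j"
      hence "bbr n X (diagmap n (B m w)) i j x m = bbr n X (diagmap n (B m w)) 0 0 x m"
        unfolding C using ij n by (simp add: diagmap_def)
      thus "p (X i i x) w = p (X 0 0 x) w" using e1 e2 \<open>i = j\<close> by simp
    qed
  qed
  have FSX: "X a b y \<in> FS" for a b y using G[of a b] unfolding good_def by blast
  show ?thesis
  proof (rule ext, rule ext, rule ext)
    fix i j x
    show "X i j x = diagmap n (X 0 0) i j x"
    proof (cases "i < n \<and> j < n")
      case False
      have "X i j = opzero" using X False unfolding glW_def by blast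
      thus ?thesis using False by (auto simp: diagmap_def)
    next
      case True
      show ?thesis
      proof (cases "x \<in> FS")
        case False
        have "X i j x = zv" using G[of i j] False unfolding good_def by blast
        moreover have "X 0 0 x = zv" using G[of 0 0] False unfolding good_def by blast
        ultimately show ?thesis by (simp add: diagmap_def opzero_def zv_def)
      next
        case xFS: True
        show ?thesis
        proof (cases "i = j")
          case False
          have "X i j x = zv"
          proof (rule nd1)
            show "X i j x \<in> FS" by (rule FSX)
            fix y assume "y \<in> FS"
            thus "p (X i j x) y = 0" using main[of i j x y] True xFS False by blast
          qed
          thus ?thesis using False by (simp add: diagmap_def opzero_def zv_def)
        next
          case eq: True
          have D: "(\<lambda>k. X i i x k - X 0 0 x k) = zv"
          proof (rule nd1)
            show "(\<lambda>k. X i i x k - X 0 0 x k) \<in> FS" by (rule FS_minus[OF FSX FSX])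
            fix y assume y: "y \<in> FS"
            have "p (X i i x) y = p (X 0 0 x) y" using main[of i i x y] True xFS y eq by blast
            thus "p (\<lambda>k. X i i x k - X 0 0 x k) y = 0" by (simp add: p_diff1[OF FSX FSX y])
          qed
          have "X i i x = X 0 0 x"
          proof (rule ext)
            fix k show "X i i x k = X 0 0 x k" using fun_cong[OF D, of k] by (simp add: zv_def)
          qed
          thus ?thesis using eq True by (simp add: diagmap_def)
        qed
      qed
    qed
  qed
qed


lemma exists_unit: "\<exists>u w0. u \<in> FS \<and> w0 \<in> FS \<and> p u w0 = 1"
proof -
  have "ev 0 \<noteq> zv" by (metis ev_def zv_def zero_neq_one)
  then obtain x where x: "x \<in> FS" "p x (ev 0) \<noteq> 0" using nd2[of "ev 0"] by auto
  let ?u = "\<lambda>i. (1 / p x (ev 0)) * x i"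
  have "?u \<in> FS" using FS_scale x by blast
  moreover have "p ?u (ev 0) = (1 / p x (ev 0)) * p x (ev 0)" by (rule p_scale1[OF x(1) FS_ev])
  hence "p ?u (ev 0) = 1" using x by simp
  ultimately show ?thesis using FS_ev by blast
qed

lemma R_glV: "a \<in> FS \<Longrightarrow> c \<in> FS \<Longrightarrow> tensor_op p [(a,c)] \<in> glV p"
  unfolding glV_def by (auto intro!: exI[of _ "[(a,c)]"])

lemma R_app: "y \<in> FS \<Longrightarrow> tensor_op p [(a,c)] y = (\<lambda>i. p y c * a i)"
  by (rule ext) (simp add: tensor_pt)

lemma part1:
  assumes n: "0 < n"
  shows "normalizer n p (diagmap n ` slV p) = diagmap n ` glV p"
proof
  obtain u w0 where u: "u \<in> FS" "w0 \<in> FS" "p u w0 = 1" using exists_unit by blast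
  define B where "B m w = opbr (tensor_op p [(ev m, w0)]) (tensor_op p [(u, w)])" for m w
  have Bgl: "w \<in> FS \<Longrightarrow> B m w \<in> glV p" for m w
    unfolding B_def using R_glV u glV_opbr by simp
  have Bsl: "w \<in> FS \<Longrightarrow> B m w \<in> slV p" for m w
  proof -
    assume w: "w \<in> FS"
    have eq: "B m w = (\<lambda>x i. \<Sum>k<length [(tensor_op p [(ev m, w0)], tensor_op p [(u, w)])].
         opbr (fst ([(tensor_op p [(ev m, w0)], tensor_op p [(u, w)])] ! k))
              (snd ([(tensor_op p [(ev m, w0)], tensor_op p [(u, w)])] ! k)) x i)"
      unfolding B_def by simp
    show ?thesis unfolding slV_def
      by (rule CollectI, rule exI[of _ "[(tensor_op p [(ev m, w0)], tensor_op p [(u, w)])]"])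
        (use R_glV u w eq in auto)
  qed
  have Bz: "B m w zv = zv" if w: "w \<in> FS" for m w
  proof -
    have "tensor_op p [(u, w)] zv = zv" "tensor_op p [(ev m, w0)] zv = zv"
      using tensor_zv u w by auto
    thus ?thesis unfolding B_def opbr_def by (simp add: zv_def)
  qed
  have Bm: "\<exists>M. \<forall>m\<ge>M. \<forall>y\<in>FS. B m w y m = p y w" if w: "w \<in> FS" for w
  proof -
    obtain M where M: "\<forall>i\<ge>M. u i = 0" using FS_bound u by blast
    have "B m w y m = p y w" if "m \<ge> M" "y \<in> FS" for m y
    proof -
      have f1: "(\<lambda>i. p y w * u i) \<in> FS" using FS_scale u by blast
      have f2: "(\<lambda>i. p y w0 * ev m i) \<in> FS" using FS_scale[OF FS_ev] by blast
      show ?thesis unfolding B_def opbr_def using that u M f1 f2 w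
        by (simp add: R_app p_scale1 ev_def)
    qed
    thus ?thesis by blast
  qed
  show "normalizer n p (diagmap n ` slV p) \<subseteq> diagmap n ` glV p"
  proof
    fix X assume X: "X \<in> normalizer n p (diagmap n ` slV p)"
    hence Xg: "X \<in> glW n p" unfolding normalizer_def by blast
    have "X = diagmap n (X 0 0)"
    proof (rule extract_diag[OF n Xg, of B])
      show "B m w zv = zv" if "w \<in> FS" for m w using Bz that .
      show "\<exists>M. \<forall>m\<ge>M. \<forall>y\<in>FS. B m w y m = p y w" if "w \<in> FS" for w using Bm that .
      show "\<exists>C. bbr n X (diagmap n (B m w)) = diagmap n C" if "w \<in> FS" for m w
        using X Bsl[OF that, of m] unfolding normalizer_def by blast
    qed
    moreover have "X 0 0 \<in> glV p" using Xg n unfolding glW_def by blast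
    ultimately show "X \<in> diagmap n ` glV p" by blast
  qed
  show "diagmap n ` glV p \<subseteq> normalizer n p (diagmap n ` slV p)"
  proof
    fix X assume "X \<in> diagmap n ` glV p"
    then obtain A where A: "A \<in> glV p" "X = diagmap n A" by blast
    have "bbr n X Y \<in> diagmap n ` slV p" if Y: "Y \<in> diagmap n ` slV p" for Y
    proof -
      obtain B where B: "B \<in> slV p" "Y = diagmap n B" using Y by blast
      have Bg: "B \<in> glV p" using slV_glV B by blast
      have "bbr n X Y = diagmap n (opbr A B)"
        using bbr_diag glV_good[OF A(1)] glV_good[OF Bg] good_zv A B by metis
      moreover have "opbr A B \<in> slV p"
      proof -
        have eq: "opbr A B = (\<lambda>x i. \<Sum>k<length [(A,B)]. opbr (fst ([(A,B)] ! k)) (snd ([(A,B)] ! k)) x i)"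
          by (simp add: opbr_def)
        show ?thesis unfolding slV_def
          by (rule CollectI, rule exI[of _ "[(A,B)]"]) (use A Bg eq in auto)
      qed
      ultimately show ?thesis by blast
    qed
    thus "X \<in> normalizer n p (diagmap n ` slV p)"
      unfolding normalizer_def using diag_glW[OF A(1)] A by blast
  qed
qed


end

definition svl :: "complex \<Rightarrow> (vec \<times> vec) list \<Rightarrow> (vec \<times> vec) list" where
  "svl e ps = concat (map (\<lambda>a. [(fst a, snd a), (\<lambda>i. - e * snd a i, fst a)]) ps)"

definition SV :: "complex \<Rightarrow> (vec \<Rightarrow> vec \<Rightarrow> complex) \<Rightarrow> op set" where
  "SV e p = {T. \<exists>ps. set ps \<subseteq> FS \<times> FS \<and> T = tensor_op p (svl e ps)}"

definition adjl :: "complex \<Rightarrow> (vec \<times> vec) list \<Rightarrow> (vec \<times> vec) list" where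
  "adjl e ps = map (\<lambda>a. (\<lambda>i. e * snd a i, fst a)) ps"

definition skew :: "(vec \<Rightarrow> vec \<Rightarrow> complex) \<Rightarrow> op \<Rightarrow> bool" where
  "skew p T \<longleftrightarrow> (\<forall>x y. x \<in> FS \<longrightarrow> y \<in> FS \<longrightarrow> p (T x) y = - p x (T y))"

lemma svl_FS: "set ps \<subseteq> FS \<times> FS \<Longrightarrow> set (svl e ps) \<subseteq> FS \<times> FS"
  by (induction ps) (auto simp: svl_def intro!: FS_scale[where a="-e", simplified])

lemma adjl_FS: "set ps \<subseteq> FS \<times> FS \<Longrightarrow> set (adjl e ps) \<subseteq> FS \<times> FS"
  by (induction ps) (auto simp: adjl_def intro!: FS_scale)

context bil begin

lemma svl_form:
  "(\<lambda>x. if x \<in> FS then (\<lambda>i. \<Sum>k<length ps. p x (snd (ps ! k)) * fst (ps ! k) i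
                                 - e * p x (fst (ps ! k)) * snd (ps ! k) i) else (\<lambda>i. 0))
   = tensor_op p (svl e ps)"
proof (rule ext)
  fix x show "(if x \<in> FS then (\<lambda>i. \<Sum>k<length ps. p x (snd (ps ! k)) * fst (ps ! k) i
                                 - e * p x (fst (ps ! k)) * snd (ps ! k) i) else (\<lambda>i. 0))
     = tensor_op p (svl e ps) x"
  proof (cases "x \<in> FS")
    case True
    show ?thesis
    proof (rule ext)
      fix i
      have "(\<Sum>k<length ps. p x (snd (ps ! k)) * fst (ps ! k) i - e * p x (fst (ps ! k)) * snd (ps ! k) i)
        = sum_list (map (\<lambda>a. p x (snd a) * fst a i - e * p x (fst a) * snd a i) ps)"
        by (rule sum_nth_list)
      also have "\<dots> = tensor_op p (svl e ps) x i"
        using True by (simp add: tensor_pt svl_def, induction ps) (auto simp: algebra_simps)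
      finally show "(if x \<in> FS then (\<lambda>i. \<Sum>k<length ps. p x (snd (ps ! k)) * fst (ps ! k) i
                                 - e * p x (fst (ps ! k)) * snd (ps ! k) i) else (\<lambda>i. 0)) i
          = tensor_op p (svl e ps) x i" using True by simp
    qed
  qed (simp add: tensor_out zv_def)
qed

lemma soV_SV: "soV p = SV 1 p"
proof -
  have "(\<lambda>x. if x \<in> FS then (\<lambda>i. \<Sum>k<length ps. p x (snd (ps ! k)) * fst (ps ! k) i
                                 - p x (fst (ps ! k)) * snd (ps ! k) i) else (\<lambda>i. 0))
   = tensor_op p (svl 1 ps)" for ps
  proof -
    have eq: "\<And>a b c::complex. a - 1 * b * c = a - b * c" by simp
    show ?thesis using svl_form[where e=1 and ps=ps, unfolded eq] .
  qed
  thus ?thesis unfolding soV_def SV_def by simp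
qed

lemma spV_SV: "spV p = SV (-1) p"
proof -
  have "(\<lambda>x. if x \<in> FS then (\<lambda>i. \<Sum>k<length ps. p x (snd (ps ! k)) * fst (ps ! k) i
                                 + p x (fst (ps ! k)) * snd (ps ! k) i) else (\<lambda>i. 0))
   = tensor_op p (svl (-1) ps)" for ps
  proof -
    have eq: "\<And>a b c::complex. a - (- 1) * b * c = a + b * c" by simp
    show ?thesis using svl_form[where e="-1" and ps=ps, unfolded eq] .
  qed
  thus ?thesis unfolding spV_def SV_def by simp
qed

lemma p_neg2: "x \<in> FS \<Longrightarrow> z \<in> FS \<Longrightarrow> p z (\<lambda>i. - x i) = - p z x"
  using p_scale2[of x z "-1"] by simp
lemma p_half2: "x \<in> FS \<Longrightarrow> z \<in> FS \<Longrightarrow> p z (\<lambda>i. x i / 2) = p z x / 2"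
  using p_scale2[of x z "1/2"] by simp

lemma SV_glV: "T \<in> SV e p \<Longrightarrow> T \<in> glV p"
  unfolding SV_def glV_def using svl_FS by blast

end

locale sbil = nbil +
  fixes e :: complex
  assumes sym: "\<And>x y. x \<in> FS \<Longrightarrow> y \<in> FS \<Longrightarrow> p x y = e * p y x"
    and ee: "e * e = 1"
begin

lemma adj1:
  assumes ps: "set ps \<subseteq> FS \<times> FS" and x: "x \<in> FS" and y: "y \<in> FS"
  shows "p (tensor_op p ps x) y = p x (tensor_op p (adjl e ps) y)"
proof -
  have "p (tensor_op p ps x) y = sum_list (map (\<lambda>a. p x (snd a) * p (fst a) y) ps)"
    using ps x y by (simp add: tensor_vsum, subst p_vsum1) (auto simp: o_def)
  also have "\<dots> = sum_list (map (\<lambda>a. p y (fst a) * p x (\<lambda>i. e * snd a i)) ps)"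
  proof (rule arg_cong[where f=sum_list], rule map_cong[OF refl])
    fix a assume "a \<in> set ps"
    hence a: "fst a \<in> FS" "snd a \<in> FS" using ps by auto
    show "p x (snd a) * p (fst a) y = p y (fst a) * p x (\<lambda>i. e * snd a i)"
      using a x y by (simp add: p_scale2 sym[of "fst a" y])
  qed
  also have "\<dots> = p x (tensor_op p (adjl e ps) y)"
    using adjl_FS[OF ps, of e] x y by (simp add: tensor_vsum, subst p_vsum2) (auto simp: o_def adjl_def)
  finally show ?thesis .
qed

lemma adj2:
  assumes ps: "set ps \<subseteq> FS \<times> FS" and x: "x \<in> FS" and y: "y \<in> FS"
  shows "p (tensor_op p (adjl e ps) x) y = p x (tensor_op p ps y)"
proof -
  have f1: "tensor_op p (adjl e ps) x \<in> FS" "tensor_op p ps y \<in> FS"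
    using tensor_FS adjl_FS ps by blast+
  have "p (tensor_op p (adjl e ps) x) y = e * p y (tensor_op p (adjl e ps) x)"
    using sym[OF f1(1) y] .
  also have "\<dots> = e * p (tensor_op p ps y) x" using adj1[OF ps y x] by simp
  also have "\<dots> = e * e * p x (tensor_op p ps y)" using sym[OF f1(2) x] by simp
  finally show ?thesis using ee by simp
qed

lemma SV_skew: assumes "T \<in> SV e p" shows "skew p T"
proof -
  obtain ps where ps: "set ps \<subseteq> FS \<times> FS" "T = tensor_op p (svl e ps)" using assms unfolding SV_def by blast
  have ss: "set (svl e ps) \<subseteq> FS \<times> FS" using svl_FS ps by blast
  have neg: "tensor_op p (adjl e (svl e ps)) y = (\<lambda>i. - T y i)" if y: "y \<in> FS" for y
  proof (rule ext)
    fix i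
    have "sum_list (map (\<lambda>a. p y (snd a) * fst a i) (adjl e (svl e ps))) = - sum_list (map (\<lambda>a. p y (snd a) * fst a i) (svl e ps))"
      using ps(1)
    proof (induction ps)
      case Nil thus ?case by (simp add: svl_def adjl_def)
    next
      case (Cons a ps)
      have a: "fst a \<in> FS" "snd a \<in> FS" using Cons.prems by auto
      have "p y (\<lambda>i. - e * snd a i) = - e * p y (snd a)" using p_scale2[OF a(2) y, of "-e"] by simp
      hence "p y (\<lambda>i. - e * snd a i) * (e * fst a i) = - (e * e) * p y (snd a) * fst a i" by simp
      hence h: "p y (\<lambda>i. - e * snd a i) * (e * fst a i) = - p y (snd a) * fst a i" using ee by simp
      show ?case using Cons h by (simp add: svl_def adjl_def algebra_simps)
    qed
    thus "tensor_op p (adjl e (svl e ps)) y i = - T y i" using y by (simp add: tensor_pt ps(2))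
  qed
  show ?thesis unfolding skew_def
  proof (intro allI impI)
    fix x y assume x: "x \<in> FS" and y: "y \<in> FS"
    have FT: "T y \<in> FS" using tensor_FS ss ps by blast
    have "p (T x) y = p x (tensor_op p (adjl e (svl e ps)) y)" using adj1[OF ss x y] ps by simp
    also have "\<dots> = - p x (T y)" using neg[OF y] p_neg2[OF FT x] by simp
    finally show "p (T x) y = - p x (T y)" .
  qed
qed


lemma half_sum:
  assumes "set qs \<subseteq> FS \<times> FS" "x \<in> FS"
  shows "sum_list (map (\<lambda>a. p x (snd a) * fst a i) (svl e (map (\<lambda>a. (\<lambda>i. fst a i / 2, snd a)) qs))) =
          (sum_list (map (\<lambda>a. p x (snd a) * fst a i) qs) - sum_list (map (\<lambda>a. p x (snd a) * fst a i) (adjl e qs))) / 2"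
  using assms(1)
proof (induction qs)
  case Nil thus ?case by (simp add: svl_def adjl_def)
next
  case (Cons a qs)
  have a: "fst a \<in> FS" "snd a \<in> FS" using Cons.prems by auto
  have h: "p x (\<lambda>i. fst a i / 2) = p x (fst a) / 2" using p_half2[OF a(1) assms(2)] .
  have IH: "sum_list (map (\<lambda>a. p x (snd a) * fst a i) (svl e (map (\<lambda>a. (\<lambda>i. fst a i / 2, snd a)) qs))) =
          (sum_list (map (\<lambda>a. p x (snd a) * fst a i) qs) - sum_list (map (\<lambda>a. p x (snd a) * fst a i) (adjl e qs))) / 2"
    using Cons by auto
  have s1: "svl e (map (\<lambda>a. (\<lambda>i. fst a i / 2, snd a)) (a#qs)) =
     [((\<lambda>i. fst a i / 2), snd a), (\<lambda>i. - e * snd a i, (\<lambda>i. fst a i / 2))] @ svl e (map (\<lambda>a. (\<lambda>i. fst a i / 2, snd a)) qs)"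
    by (simp add: svl_def)
  have s2: "adjl e (a#qs) = (\<lambda>i. e * snd a i, fst a) # adjl e qs" by (simp add: adjl_def)
  show ?case unfolding s1 s2
    apply (simp add: h)
    apply (subst IH)
    apply (simp add: field_simps)
    done
qed

lemma skew_SV: assumes A: "A \<in> glV p" and sk: "skew p A" shows "A \<in> SV e p"
proof -
  obtain ps where ps: "set ps \<subseteq> FS \<times> FS" "A = tensor_op p ps" using A unfolding glV_def by blast
  let ?A' = "tensor_op p (adjl e ps)"
  have FA: "A x \<in> FS" "?A' x \<in> FS" for x using tensor_FS adjl_FS ps by blast+
  have sum0: "(\<lambda>i. A y i + ?A' y i) = zv" if y: "y \<in> FS" for y
  proof (rule nd2)
    show "(\<lambda>i. A y i + ?A' y i) \<in> FS" using FS_add FA by blast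
    fix x assume x: "x \<in> FS"
    have "p x (\<lambda>i. A y i + ?A' y i) = p x (A y) + p x (?A' y)" using p_add2 FA x by blast
    also have "p x (?A' y) = p (A x) y" using adj1[OF ps(1) x y] ps by simp
    also have "p (A x) y = - p x (A y)" using sk x y unfolding skew_def by blast
    finally show "p x (\<lambda>i. A y i + ?A' y i) = 0" by simp
  qed
  let ?ps2 = "map (\<lambda>a. (\<lambda>i. fst a i / 2, snd a)) ps"
  have ps2: "set ?ps2 \<subseteq> FS \<times> FS" using ps FS_scale[of _ "1/2"] by fastforce
  have "A = tensor_op p (svl e ?ps2)"
  proof (rule ext)
    fix x show "A x = tensor_op p (svl e ?ps2) x"
    proof (cases "x \<in> FS")
      case True
      show ?thesis
      proof (rule ext)
        fix i
        have "sum_list (map (\<lambda>a. p x (snd a) * fst a i) (svl e ?ps2)) =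
          (sum_list (map (\<lambda>a. p x (snd a) * fst a i) ps) - sum_list (map (\<lambda>a. p x (snd a) * fst a i) (adjl e ps))) / 2"
          by (rule half_sum[OF ps(1) True])
        moreover have "?A' x i = - A x i" using fun_cong[OF sum0[OF True], of i] by (simp add: zv_def eq_neg_iff_add_eq_0 add.commute)
        ultimately show "A x i = tensor_op p (svl e ?ps2) x i"
          using True by (simp add: tensor_pt ps(2))
      qed
    qed (simp add: tensor_out ps(2))
  qed
  thus ?thesis unfolding SV_def using ps2 by blast
qed


lemma opbr_skew:
  assumes A: "A \<in> glV p" "skew p A" and B: "B \<in> glV p" "skew p B"
  shows "skew p (opbr A B)"
  unfolding skew_def
proof (intro allI impI)
  fix x y assume x: "x \<in> FS" and y: "y \<in> FS"
  have GA: "good A" and GB: "good B" using A B glV_good by blast+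
  have F: "A z \<in> FS" "B z \<in> FS" for z using GA GB unfolding good_def by blast+
  have sA: "p (A u) v = - p u (A v)" if "u \<in> FS" "v \<in> FS" for u v using A(2) that unfolding skew_def by blast
  have sB: "p (B u) v = - p u (B v)" if "u \<in> FS" "v \<in> FS" for u v using B(2) that unfolding skew_def by blast
  have "p (opbr A B x) y = p (A (B x)) y - p (B (A x)) y"
    unfolding opbr_def using p_diff1 F y by blast
  also have "\<dots> = - p (B x) (A y) + p (A x) (B y)" using sA[OF F(2) y] sB[OF F(1) y] by simp
  also have "\<dots> = p x (B (A y)) - p x (A (B y))" using sB[OF x F(1)] sA[OF x F(2)] by simp
  also have "\<dots> = - p x (opbr A B y)"
    unfolding opbr_def using p_diff2 F x by simp
  finally show "p (opbr A B x) y = - p x (opbr A B y)" .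
qed

lemma part2:
  assumes n: "0 < n"
  shows "normalizer n p (diagmap n ` SV e p) = diagmap n ` SV e p"
proof
  define S where "S m w = tensor_op p (svl e [(ev m, w)])" for m w
  have SSV: "w \<in> FS \<Longrightarrow> S m w \<in> SV e p" for m w
    unfolding S_def SV_def by (auto intro!: exI[of _ "[(ev m, w)]"])
  have Sz: "S m w zv = zv" if w: "w \<in> FS" for m w
    unfolding S_def by (rule tensor_zv, rule svl_FS) (use w in auto)
  have Sm: "\<exists>M. \<forall>m\<ge>M. \<forall>y\<in>FS. S m w y m = p y w" if w: "w \<in> FS" for w
  proof -
    obtain M where M: "\<forall>i\<ge>M. w i = 0" using FS_bound w by blast
    have "S m w y m = p y w" if "m \<ge> M" "y \<in> FS" for m y
      unfolding S_def using that M by (simp add: tensor_pt svl_def ev_def)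
    thus ?thesis by blast
  qed
  show "normalizer n p (diagmap n ` SV e p) \<subseteq> diagmap n ` SV e p"
  proof
    fix X assume X: "X \<in> normalizer n p (diagmap n ` SV e p)"
    hence Xg: "X \<in> glW n p" unfolding normalizer_def by blast
    have XA: "X = diagmap n (X 0 0)"
    proof (rule extract_diag[OF n Xg, of S])
      show "S m w zv = zv" if "w \<in> FS" for m w using Sz that .
      show "\<exists>M. \<forall>m\<ge>M. \<forall>y\<in>FS. S m w y m = p y w" if "w \<in> FS" for w using Sm that .
      show "\<exists>C. bbr n X (diagmap n (S m w)) = diagmap n C" if "w \<in> FS" for m w
        using X SSV[OF that, of m] unfolding normalizer_def by blast
    qed
    define A where "A = X 0 0"
    have Agl: "A \<in> glV p" using Xg n unfolding glW_def A_def by blast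
    have GA: "good A" using glV_good Agl by blast
    have brk: "skew p (opbr A B)" if B: "B \<in> SV e p" for B
    proof -
      have Bg: "B \<in> glV p" using SV_glV B by blast
      have "bbr n X (diagmap n B) \<in> diagmap n ` SV e p" using X B unfolding normalizer_def by blast
      then obtain C where C: "C \<in> SV e p" "bbr n X (diagmap n B) = diagmap n C" by blast
      have "bbr n X (diagmap n B) = diagmap n (opbr A B)"
        using XA bbr_diag glV_good[OF Bg] GA good_zv unfolding A_def by metis
      hence "opbr A B = C" using C diag_inj[OF n] by metis
      thus ?thesis using SV_skew C by blast
    qed
    obtain ps where ps: "set ps \<subseteq> FS \<times> FS" "A = tensor_op p ps" using Agl unfolding glV_def by blast
    define A' where "A' = tensor_op p (adjl e ps)"
    have A'gl: "A' \<in> glV p" unfolding A'_def glV_def using adjl_FS ps by blast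
    have GA': "good A'" using glV_good A'gl by blast
    define C where "C = (\<lambda>x i. A x i + A' x i)"
    have FA: "A z \<in> FS" "A' z \<in> FS" for z using GA GA' unfolding good_def by blast+
    have FC: "C z \<in> FS" for z unfolding C_def using FS_add FA by blast
    obtain N1 where N1: "\<forall>x i. N1 \<le> i \<longrightarrow> A x i = 0" using GA unfolding good_def by blast
    obtain N2 where N2: "\<forall>x i. N2 \<le> i \<longrightarrow> A' x i = 0" using GA' unfolding good_def by blast
    have a1: "p (A u) v = p u (A' v)" if "u \<in> FS" "v \<in> FS" for u v
      using adj1[OF ps(1) that] unfolding ps(2) A'_def .
    have a2: "p (A' u) v = p u (A v)" if "u \<in> FS" "v \<in> FS" for u v
      using adj2[OF ps(1) that] unfolding ps(2) A'_def .
    have Cz: "C x = zv" if x: "x \<in> FS" for x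
    proof (rule nd1[OF FC])
      fix w assume w: "w \<in> FS"
      obtain M where M: "\<forall>m\<ge>M. \<forall>y\<in>FS. S m w y m = p y w" using Sm w by blast
      define m where "m = max (max N1 N2) M"
      define B where "B = S m w"
      have BSV: "B \<in> SV e p" unfolding B_def using SSV w by blast
      have Bg: "B \<in> glV p" using SV_glV BSV by blast
      have sB: "p (B u) v = - p u (B v)" if "u \<in> FS" "v \<in> FS" for u v
        using SV_skew[OF BSV] that unfolding skew_def by blast
      have sAB: "p (opbr A B u) v = - p u (opbr A B v)" if "u \<in> FS" "v \<in> FS" for u v
        using brk[OF BSV] that unfolding skew_def by blast
      have FB: "B z \<in> FS" for z using glV_good[OF Bg] unfolding good_def by blast
      define V where "V = (\<lambda>k. C (B x) k - B (C x) k)"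
      have Vz: "V = zv"
      proof (rule nd1)
        show "V \<in> FS" unfolding V_def using FS_minus FC FB by blast
        fix y assume y: "y \<in> FS"
        have e1: "p V y = p (C (B x)) y - p (B (C x)) y" unfolding V_def using p_diff1 FC FB y by blast
        have e2: "p (C (B x)) y = p (A (B x)) y + p (A' (B x)) y" unfolding C_def using p_add1 FA y by blast
        have e3: "p (A' (B x)) y = - p x (B (A y))" using a2[OF FB y] sB[OF x FA(1)] by simp
        have e4: "p (B (C x)) y = - (p (A x) (B y) + p (A' x) (B y))"
          using sB[OF FC y] p_add1[OF FA(1) FA(2) FB] unfolding C_def by simp
        have e5: "p (A' x) (B y) = p x (A (B y))" using a2[OF x FB] .
        have e6: "p (A x) (B y) = - p (B (A x)) y" using sB[OF FA(1) y] by simp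
        have e7: "p (opbr A B x) y = p (A (B x)) y - p (B (A x)) y"
          unfolding opbr_def using p_diff1 FA FB y by blast
        have e8: "p x (opbr A B y) = p x (A (B y)) - p x (B (A y))"
          unfolding opbr_def using p_diff2 FA FB x by blast
        have e9: "p (opbr A B x) y = - p x (opbr A B y)" using sAB[OF x y] .
        show "p V y = 0" using e1 e2 e3 e4 e5 e6 e7 e8 e9 by (simp add: algebra_simps)
      qed
      have "V m = 0" using Vz by (simp add: zv_def)
      moreover have "C (B x) m = 0" unfolding C_def m_def using N1 N2 by simp
      moreover have "B (C x) m = p (C x) w" unfolding B_def using M FC m_def by simp
      ultimately show "p (C x) w = 0" unfolding V_def by simp
    qed
    have skA: "skew p A" unfolding skew_def
    proof (intro allI impI)
      fix x y assume x: "x \<in> FS" and y: "y \<in> FS"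
      have "A' y = (\<lambda>i. - A y i)"
      proof (rule ext)
        fix i show "A' y i = - A y i" using fun_cong[OF Cz[OF y], of i]
          unfolding C_def zv_def by (simp add: eq_neg_iff_add_eq_0 add.commute)
      qed
      hence "p (A x) y = p x (\<lambda>i. - A y i)" using a1[OF x y] by simp
      also have "\<dots> = - p x (A y)" using p_neg2[OF FA(1) x] .
      finally show "p (A x) y = - p x (A y)" .
    qed
    have "A \<in> SV e p" using skew_SV[OF Agl skA] .
    thus "X \<in> diagmap n ` SV e p" using XA unfolding A_def by blast
  qed
  show "diagmap n ` SV e p \<subseteq> normalizer n p (diagmap n ` SV e p)"
  proof
    fix X assume "X \<in> diagmap n ` SV e p"
    then obtain A where A: "A \<in> SV e p" "X = diagmap n A" by blast
    have Ag: "A \<in> glV p" using SV_glV A by blast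
    have "bbr n X Y \<in> diagmap n ` SV e p" if Y: "Y \<in> diagmap n ` SV e p" for Y
    proof -
      obtain B where B: "B \<in> SV e p" "Y = diagmap n B" using Y by blast
      have Bg: "B \<in> glV p" using SV_glV B by blast
      have "bbr n X Y = diagmap n (opbr A B)"
        using bbr_diag glV_good[OF Ag] glV_good[OF Bg] good_zv A B by metis
      moreover have "opbr A B \<in> SV e p"
        using skew_SV[OF glV_opbr[OF Ag Bg] opbr_skew[OF Ag SV_skew[OF A(1)] Bg SV_skew[OF B(1)]]] .
      ultimately show ?thesis by blast
    qed
    thus "X \<in> normalizer n p (diagmap n ` SV e p)"
      unfolding normalizer_def using diag_glW[OF Ag] A by blast
  qed
qed

end

theorem lemma2p8:
  fixes n :: nat and p :: "vec \<Rightarrow> vec \<Rightarrow> complex"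
  assumes "n > 0" and "bilinear_pairing p" and "nondegenerate p"
  shows "normalizer n p (diagmap n ` slV p) = diagmap n ` glV p
    \<and> (\<forall>b. bilinear_pairing b \<and> nondegenerate b \<and> (\<forall>x\<in>FS. \<forall>y\<in>FS. b x y = b y x)
          \<longrightarrow> normalizer n b (diagmap n ` soV b) = diagmap n ` soV b)
    \<and> (\<forall>b. bilinear_pairing b \<and> nondegenerate b \<and> (\<forall>x\<in>FS. \<forall>y\<in>FS. b x y = - b y x)
          \<longrightarrow> normalizer n b (diagmap n ` spV b) = diagmap n ` spV b)"
proof (intro conjI allI impI)
  interpret P: nbil p by unfold_locales (use assms in blast)+
  show "normalizer n p (diagmap n ` slV p) = diagmap n ` glV p" using P.part1[OF assms(1)] .
next
  fix b assume h: "bilinear_pairing b \<and> nondegenerate b \<and> (\<forall>x\<in>FS. \<forall>y\<in>FS. b x y = b y x)"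
  interpret B: sbil b 1
  proof unfold_locales
    show "bilinear_pairing b" using h by blast
    show "nondegenerate b" using h by blast
    show "b x y = 1 * b y x" if "x \<in> FS" "y \<in> FS" for x y
    proof -
      have "b x y = b y x" using h that by blast
      thus ?thesis by simp
    qed
  qed simp
  show "normalizer n b (diagmap n ` soV b) = diagmap n ` soV b"
    using B.part2[OF assms(1)] B.soV_SV by simp
next
  fix b assume h: "bilinear_pairing b \<and> nondegenerate b \<and> (\<forall>x\<in>FS. \<forall>y\<in>FS. b x y = - b y x)"
  interpret B: sbil b "-1"
  proof unfold_locales
    show "bilinear_pairing b" using h by blast
    show "nondegenerate b" using h by blast
    show "b x y = (-1) * b y x" if "x \<in> FS" "y \<in> FS" for x y
    proof -
      have "b x y = - b y x" using h that by blast
      thus ?thesis by simp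
    qed
  qed simp
  show "normalizer n b (diagmap n ` spV b) = diagmap n ` spV b"
    using B.part2[OF assms(1)] B.spV_SV by simp
qed

end
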